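(* Let $N\ge 1$, let $\mathcal{S}_{>0}=\{\lambda\in\mathbb{R}^N:\lambda_i>0,\ \sum_{i=1}^N\lambda_i=1\}$ be equipped with the Fisher--Rao metric $g_{ij}(\lambda)=\delta_{ij}/(4\lambda_i)$, and let $\beta_1,\ldots,\beta_N>0$ be the singular values of an operator $B$. Define the aligned transport map $\Phi_B:\mathcal{S}_{>0}\to\mathcal{S}_{>0}$ by \[ \Phi_B(\lambda)_i=\frac{\beta_i^2\lambda_i}{\sum_{j=1}^N\beta_j^2\lambda_j}. \] Then $\Phi_B$ is an isometry of $(\mathcal{S}_{>0},g)$ if and only if $\beta_1=\beta_2=\cdots=\beta_N$.
   Context: $\Phi_B$ is the map on spectral states induced by composing with $B$ under SVD alignment (the right singular vectors of $B$ coincide with the left singular vectors of the preceding operator $A$): if $\lambda=\lambda(A)$ is the normalised squared-singular-value vector of $A$, then $\Phi_B(\lambda)=\lambda(BA)$. The Fisher--Rao distance induced by $g$ is $d(\lambda,\mu)=2\arccos\big(\sum_i\sqrt{\lambda_i\mu_i}\big)$. *)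

theory Defs
  imports "HOL-Analysis.Analysis"
begin

text \<open>Open probability simplex in R^N, N = CARD('n) (at least 1 automatically).\<close>
definition simplex_pos :: "(real ^ 'n) set" where
  "simplex_pos = {lam. (\<forall>i. lam $ i > 0) \<and> (\<Sum>i\<in>UNIV. lam $ i) = 1}"

text \<open>Fisher--Rao distance induced by g_ij = delta_ij / (4 lambda_i).\<close>
definition fisher_rao_dist :: "real ^ 'n \<Rightarrow> real ^ 'n \<Rightarrow> real" where
  "fisher_rao_dist lam mu = 2 * arccos (\<Sum>i\<in>UNIV. sqrt (lam $ i * mu $ i))"

definition aligned_transport :: "real ^ 'n \<Rightarrow> real ^ 'n \<Rightarrow> real ^ 'n" where
  "aligned_transport beta lam =
     (\<chi> i. (beta $ i)\<^sup>2 * lam $ i / (\<Sum>j\<in>UNIV. (beta $ j)\<^sup>2 * lam $ j))"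

definition fr_isometry :: "(real ^ 'n \<Rightarrow> real ^ 'n) \<Rightarrow> bool" where
  "fr_isometry F \<longleftrightarrow> bij_betw F simplex_pos simplex_pos \<and>
     (\<forall>lam\<in>simplex_pos. \<forall>mu\<in>simplex_pos.
        fisher_rao_dist (F lam) (F mu) = fisher_rao_dist lam mu)"

end

theory Submission
  imports Defs
begin

definition BCf :: "real ^ 'n \<Rightarrow> real ^ 'n \<Rightarrow> real" where
  "BCf lam mu = (\<Sum>i\<in>UNIV. sqrt (lam $ i * mu $ i))"

definition Sf :: "real ^ 'n \<Rightarrow> real ^ 'n \<Rightarrow> real" where
  "Sf beta lam = (\<Sum>i\<in>UNIV. (beta $ i)\<^sup>2 * lam $ i)"

definition Pf :: "real ^ 'n \<Rightarrow> real ^ 'n \<Rightarrow> real ^ 'n \<Rightarrow> real" where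
  "Pf beta lam mu = (\<Sum>i\<in>UNIV. (beta $ i)\<^sup>2 * sqrt (lam $ i * mu $ i))"

lemma sqdiff: "a \<ge> 0 \<Longrightarrow> b \<ge> 0 \<Longrightarrow> (sqrt a - sqrt b)\<^sup>2 = a + b - 2 * sqrt (a * b)"
  by (simp add: power2_diff real_sqrt_mult)

lemma bc_eq:
  assumes "lam \<in> simplex_pos" "mu \<in> simplex_pos"
  shows "(\<Sum>i\<in>UNIV. (sqrt (lam $ i) - sqrt (mu $ i))\<^sup>2) = 2 - 2 * BCf lam mu"
proof -
  have p: "\<And>i. lam $ i > 0" "\<And>i. mu $ i > 0" "sum (\<lambda>i. lam $ i) UNIV = 1" "sum (\<lambda>i. mu $ i) UNIV = 1"
    using assms by (auto simp: simplex_pos_def)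
  have "(\<Sum>i\<in>UNIV. (sqrt (lam $ i) - sqrt (mu $ i))\<^sup>2)
      = (\<Sum>i\<in>UNIV. lam $ i + mu $ i - 2 * sqrt (lam $ i * mu $ i))"
    by (rule sum.cong) (auto intro!: sqdiff less_imp_le p)
  also have "\<dots> = 2 - 2 * BCf lam mu"
    by (simp add: sum_subtractf sum.distrib sum_distrib_left[symmetric] p BCf_def)
  finally show ?thesis .
qed

lemma bc_bounds:
  assumes "lam \<in> simplex_pos" "mu \<in> simplex_pos"
  shows "0 \<le> BCf lam mu" "BCf lam mu \<le> 1" "lam \<noteq> mu \<Longrightarrow> BCf lam mu < 1"
proof -
  show "0 \<le> BCf lam mu" unfolding BCf_def using assms
    by (intro sum_nonneg real_sqrt_ge_zero mult_nonneg_nonneg) (auto simp: simplex_pos_def less_imp_le)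
  have "0 \<le> (\<Sum>i\<in>UNIV. (sqrt (lam $ i) - sqrt (mu $ i))\<^sup>2)" by (intro sum_nonneg) auto
  then show "BCf lam mu \<le> 1" using bc_eq[OF assms] by simp
  assume "lam \<noteq> mu"
  then obtain k where k: "lam $ k \<noteq> mu $ k" by (auto simp: vec_eq_iff)
  have "sqrt (lam $ k) \<noteq> sqrt (mu $ k)" using k by simp
  then have "0 < (\<Sum>i\<in>UNIV. (sqrt (lam $ i) - sqrt (mu $ i))\<^sup>2)"
    by (intro sum_pos2[where i=k]) auto
  then show "BCf lam mu < 1" using bc_eq[OF assms] by simp
qed

lemma S_pos:
  assumes "\<forall>i. beta $ i > 0" "lam \<in> simplex_pos"
  shows "Sf beta lam > 0"
proof -
  have "\<And>i. lam $ i > 0" using assms by (auto simp: simplex_pos_def)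
  then show ?thesis unfolding Sf_def using assms(1)
  proof (intro sum_pos)
    fix i
    have "beta $ i > 0" "lam $ i > 0" using assms(1) \<open>\<And>i. lam $ i > 0\<close> by auto
    then show "0 < (beta $ i)\<^sup>2 * lam $ i" by simp
  qed auto
qed

lemma transport_bc:
  assumes b: "\<forall>i. beta $ i > 0" and l: "lam \<in> simplex_pos" and m: "mu \<in> simplex_pos"
  shows "BCf (aligned_transport beta lam) (aligned_transport beta mu)
       = Pf beta lam mu / sqrt (Sf beta lam * Sf beta mu)"
proof -
  have sl: "Sf beta lam > 0" and sm: "Sf beta mu > 0" using S_pos b l m by auto
  have "\<And>i. sqrt ((beta $ i)\<^sup>2 * lam $ i / Sf beta lam * ((beta $ i)\<^sup>2 * mu $ i / Sf beta mu))
     = (beta $ i)\<^sup>2 * sqrt (lam $ i * mu $ i) / sqrt (Sf beta lam * Sf beta mu)"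
  proof -
    fix i
    have "(beta $ i)\<^sup>2 * lam $ i / Sf beta lam * ((beta $ i)\<^sup>2 * mu $ i / Sf beta mu)
       = ((beta $ i)\<^sup>2)\<^sup>2 * (lam $ i * mu $ i) / (Sf beta lam * Sf beta mu)"
      by (simp add: power_mult_distrib power2_eq_square[symmetric] mult_ac)
    then show "sqrt ((beta $ i)\<^sup>2 * lam $ i / Sf beta lam * ((beta $ i)\<^sup>2 * mu $ i / Sf beta mu))
     = (beta $ i)\<^sup>2 * sqrt (lam $ i * mu $ i) / sqrt (Sf beta lam * Sf beta mu)"
      by (simp add: real_sqrt_mult real_sqrt_divide power2_eq_square)
  qed
  then show ?thesis
    unfolding BCf_def aligned_transport_def Pf_def
    by (simp add: Sf_def[symmetric] sum_divide_distrib)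
qed

lemma mid_sum:
  assumes l: "\<forall>k. lam $ k \<ge> 0" and m: "\<forall>k. mu $ k \<ge> 0" and Z: "Z > 0"
  shows "(\<Sum>k\<in>UNIV. w k * sqrt (lam $ k * ((sqrt (lam $ k) + sqrt (mu $ k))\<^sup>2 / Z)))
       = ((\<Sum>k\<in>UNIV. w k * lam $ k) + (\<Sum>k\<in>UNIV. w k * sqrt (lam $ k * mu $ k))) / sqrt Z"
proof -
  have "\<And>k. w k * sqrt (lam $ k * ((sqrt (lam $ k) + sqrt (mu $ k))\<^sup>2 / Z))
      = (w k * lam $ k + w k * sqrt (lam $ k * mu $ k)) / sqrt Z"
  proof -
    fix k
    have "sqrt (lam $ k * ((sqrt (lam $ k) + sqrt (mu $ k))\<^sup>2 / Z))
        = sqrt (lam $ k) * (sqrt (lam $ k) + sqrt (mu $ k)) / sqrt Z"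
      using l m Z by (simp add: real_sqrt_mult real_sqrt_divide)
    also have "\<dots> = (lam $ k + sqrt (lam $ k * mu $ k)) / sqrt Z"
      using l m by (simp add: algebra_simps real_sqrt_mult)
    finally show "w k * sqrt (lam $ k * ((sqrt (lam $ k) + sqrt (mu $ k))\<^sup>2 / Z))
      = (w k * lam $ k + w k * sqrt (lam $ k * mu $ k)) / sqrt Z"
      by (simp add: algebra_simps)
  qed
  then show ?thesis by (simp add: sum_divide_distrib[symmetric] sum.distrib)
qed

lemma key:
  assumes b: "\<forall>i. beta $ i > 0"
    and iso: "\<forall>lam\<in>simplex_pos. \<forall>mu\<in>simplex_pos.
       BCf (aligned_transport beta lam) (aligned_transport beta mu) = BCf lam mu"
    and l: "lam \<in> simplex_pos" and u: "mu \<in> simplex_pos"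
  shows "Sf beta lam = Sf beta mu"
proof (cases "lam = mu")
  case True then show ?thesis by simp
next
  case False
  have lp: "\<And>k. lam $ k > 0" and up: "\<And>k. mu $ k > 0"
    and ls: "(\<Sum>k\<in>UNIV. lam $ k) = 1" and us: "(\<Sum>k\<in>UNIV. mu $ k) = 1"
    using l u by (auto simp: simplex_pos_def)
  have l0: "\<forall>k. lam $ k \<ge> 0" and u0: "\<forall>k. mu $ k \<ge> 0" using lp up less_imp_le by auto
  define Z where "Z = (\<Sum>k\<in>UNIV. (sqrt (lam $ k) + sqrt (mu $ k))\<^sup>2)"
  have tp: "\<And>k. (sqrt (lam $ k) + sqrt (mu $ k))\<^sup>2 > 0"
  proof -
    fix k
    have "sqrt (lam $ k) > 0" "sqrt (mu $ k) > 0" using lp up by auto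
    then have "sqrt (lam $ k) + sqrt (mu $ k) > 0" by (rule add_pos_pos)
    then show "(sqrt (lam $ k) + sqrt (mu $ k))\<^sup>2 > 0" by (rule zero_less_power)
  qed
  have Zp: "Z > 0" unfolding Z_def by (rule sum_pos) (simp_all only: tp finite UNIV_not_empty not_False_eq_True)
  define m where "m = (\<chi> k. (sqrt (lam $ k) + sqrt (mu $ k))\<^sup>2 / Z)"
  have m2: "m = (\<chi> k. (sqrt (mu $ k) + sqrt (lam $ k))\<^sup>2 / Z)"
    unfolding m_def by (simp add: add.commute)
  have mS: "m \<in> simplex_pos"
    unfolding simplex_pos_def m_def using tp Zp
    by (auto simp: sum_divide_distrib[symmetric] Z_def[symmetric])
  define c where "c = BCf lam mu"
  define P where "P = Pf beta lam mu"
  have Psym: "Pf beta mu lam = P" unfolding P_def Pf_def by (simp add: mult.commute)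
  have csym: "BCf mu lam = c" unfolding c_def BCf_def by (simp add: mult.commute)
  have c1: "c < 1" using bc_bounds(3)[OF l u False] c_def by simp
  have h1: "BCf lam m = (1 + c) / sqrt Z"
    using mid_sum[OF l0 u0 Zp, of "\<lambda>_. 1"] ls unfolding BCf_def m_def c_def by simp
  have h2: "BCf mu m = (1 + c) / sqrt Z"
    using mid_sum[OF u0 l0 Zp, of "\<lambda>_. 1"] us csym unfolding BCf_def m2 by simp
  have h3: "Pf beta lam m = (Sf beta lam + P) / sqrt Z"
    using mid_sum[OF l0 u0 Zp, of "\<lambda>k. (beta $ k)\<^sup>2"] unfolding Pf_def m_def P_def Sf_def by simp
  have h4: "Pf beta mu m = (Sf beta mu + P) / sqrt Z"
    using mid_sum[OF u0 l0 Zp, of "\<lambda>k. (beta $ k)\<^sup>2"] Psym unfolding Pf_def m2 Sf_def by simp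
  have e1: "Pf beta lam m / sqrt (Sf beta lam * Sf beta m) = BCf lam m"
    using iso l mS transport_bc[OF b l mS] by auto
  have e2: "Pf beta mu m / sqrt (Sf beta mu * Sf beta m) = BCf mu m"
    using iso u mS transport_bc[OF b u mS] by auto
  have e3: "P / sqrt (Sf beta lam * Sf beta mu) = c"
    using iso l u transport_bc[OF b l u] unfolding P_def c_def by auto
  define a where "a = sqrt (Sf beta lam)"
  define d where "d = sqrt (Sf beta mu)"
  define e where "e = sqrt (Sf beta m)"
  define z where "z = sqrt Z"
  have ap: "a > 0" unfolding a_def using S_pos[OF b l] by simp
  have dp: "d > 0" unfolding d_def using S_pos[OF b u] by simp
  have ep: "e > 0" unfolding e_def using S_pos[OF b mS] by simp
  have zp: "z > 0" unfolding z_def using Zp by simp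
  have Sl: "Sf beta lam = a\<^sup>2" unfolding a_def using S_pos[OF b l] by simp
  have Su: "Sf beta mu = d\<^sup>2" unfolding d_def using S_pos[OF b u] by simp
  have PP: "P = c * a * d" using e3 ap dp
    unfolding a_def d_def by (simp add: real_sqrt_mult field_simps)
  have f1: "(a\<^sup>2 + c * a * d) / z / (a * e) = (1 + c) / z"
    using e1 h1 h3 Sl PP unfolding a_def e_def z_def by (simp add: real_sqrt_mult)
  have f2: "(d\<^sup>2 + c * a * d) / z / (d * e) = (1 + c) / z"
    using e2 h2 h4 Su PP unfolding d_def e_def z_def by (simp add: real_sqrt_mult)
  have "(a\<^sup>2 + c * a * d) / z / (a * e) = (a + c * d) / (z * e)"
    using ap ep zp by (simp add: field_simps power2_eq_square)
  moreover have "(d\<^sup>2 + c * a * d) / z / (d * e) = (d + c * a) / (z * e)"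
    using dp ep zp by (simp add: field_simps power2_eq_square)
  ultimately have "(a + c * d) / (z * e) = (d + c * a) / (z * e)" using f1 f2 by simp
  then have "a + c * d = d + c * a" using zp ep by (simp add: field_simps)
  then have "(a - d) * (1 - c) = 0" by (simp add: algebra_simps)
  then have "a = d" using c1 by simp
  then show ?thesis using Sl Su by simp
qed

lemma iso_bc:
  assumes iso: "fr_isometry F" and l: "lam \<in> simplex_pos" and u: "mu \<in> simplex_pos"
  shows "BCf (F lam) (F mu) = BCf lam mu"
proof -
  have bij: "bij_betw F simplex_pos simplex_pos" using iso by (simp add: fr_isometry_def)
  have Fl: "F lam \<in> simplex_pos" and Fu: "F mu \<in> simplex_pos"
    using bij l u by (auto dest: bij_betwE)
  have "fisher_rao_dist (F lam) (F mu) = fisher_rao_dist lam mu"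
    using iso l u by (simp add: fr_isometry_def)
  then have "arccos (BCf (F lam) (F mu)) = arccos (BCf lam mu)"
    by (simp add: fisher_rao_dist_def BCf_def)
  moreover have "\<bar>BCf (F lam) (F mu)\<bar> \<le> 1" "\<bar>BCf lam mu\<bar> \<le> 1"
    using bc_bounds[OF Fl Fu] bc_bounds[OF l u] by auto
  ultimately show ?thesis using arccos_eq_iff by blast
qed

lemma const_transport:
  fixes beta :: "real ^ 'n"
  assumes "\<forall>i j. beta $ i = beta $ j" "\<forall>i. beta $ i > 0" "lam \<in> simplex_pos"
  shows "aligned_transport beta lam = lam"
proof -
  obtain k :: 'n where "True" by simp
  define c where "c = beta $ k"
  have eq: "\<And>i. beta $ i = c" using assms(1) unfolding c_def by auto
  have ls: "(\<Sum>j\<in>UNIV. lam $ j) = 1" using assms(3) by (simp add: simplex_pos_def)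
  have bk: "c > 0" using assms(2) unfolding c_def by simp
  have "(\<Sum>j\<in>UNIV. (beta $ j)\<^sup>2 * lam $ j) = c\<^sup>2"
    by (simp add: eq sum_distrib_left[symmetric] ls)
  then show ?thesis using bk unfolding aligned_transport_def
    by (simp add: eq vec_eq_iff)
qed

theorem mainTheorem6:
  fixes beta :: "real ^ 'n"
  assumes "\<forall>i. beta $ i > 0"
  shows "fr_isometry (aligned_transport beta) \<longleftrightarrow> (\<forall>i j. beta $ i = beta $ j)"
proof
  assume iso: "fr_isometry (aligned_transport beta)"
  show "\<forall>i j. beta $ i = beta $ j"
  proof (rule ccontr)
    assume "\<not> (\<forall>i j. beta $ i = beta $ j)"
    then obtain i j where ij: "beta $ i \<noteq> beta $ j" by blast
    then have inj: "i \<noteq> j" by auto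
    define N where "N = real CARD('n)"
    have Np: "N > 0" unfolding N_def by simp
    define eps where "eps = 1 / (2 * N)"
    have ep: "eps > 0" "eps < 1 / N" unfolding eps_def using Np by (auto simp: field_simps)
    define u :: "real ^ 'n" where "u = (\<chi> k. 1 / N)"
    define v :: "real ^ 'n" where
      "v = (\<chi> k. 1 / N + (if k = i then eps else 0) - (if k = j then eps else 0))"
    have uS: "u \<in> simplex_pos" unfolding u_def simplex_pos_def using Np by (simp add: N_def)
    have vpos: "\<And>k. v $ k > 0" unfolding v_def using ep inj Np by auto
    have vsum: "(\<Sum>k\<in>UNIV. v $ k) = (\<Sum>k::'n\<in>UNIV. 1 / N) + eps - eps"
      unfolding v_def by (simp add: sum.distrib sum_subtractf)
    have vS: "v \<in> simplex_pos" unfolding simplex_pos_def using vpos vsum Np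
      by (simp add: N_def)
    have bc: "\<forall>lam\<in>simplex_pos. \<forall>mu\<in>simplex_pos.
       BCf (aligned_transport beta lam) (aligned_transport beta mu) = BCf lam mu"
      using iso_bc[OF iso] by blast
    have "Sf beta u = Sf beta v" using key[OF assms bc uS vS] .
    moreover have "Sf beta v = Sf beta u + (beta $ i)\<^sup>2 * eps - (beta $ j)\<^sup>2 * eps"
    proof -
      have a: "\<And>k. (beta $ k)\<^sup>2 * v $ k = (beta $ k)\<^sup>2 * u $ k
          + (if k = i then (beta $ k)\<^sup>2 * eps else 0) - (if k = j then (beta $ k)\<^sup>2 * eps else 0)"
        unfolding u_def v_def by (simp add: algebra_simps)
      show ?thesis unfolding Sf_def a sum_subtractf sum.distrib by simp
    qed
    ultimately have "(beta $ i)\<^sup>2 * eps = (beta $ j)\<^sup>2 * eps" by simp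
    then have "(beta $ i)\<^sup>2 = (beta $ j)\<^sup>2" using ep by simp
    moreover have "beta $ i > 0" "beta $ j > 0" using assms by auto
    ultimately show False using ij by (auto simp: power2_eq_iff)
  qed
next
  assume c: "\<forall>i j. beta $ i = beta $ j"
  have id: "\<And>lam. lam \<in> simplex_pos \<Longrightarrow> aligned_transport beta lam = lam"
    using const_transport[OF c assms] by blast
  have "bij_betw (aligned_transport beta) simplex_pos simplex_pos"
    using bij_betw_cong[of simplex_pos "aligned_transport beta" id] id by (simp add: bij_betw_id)
  then show "fr_isometry (aligned_transport beta)"
    unfolding fr_isometry_def using id by simp
qed

end
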